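(* Let $X\in\mathcal{L}\cap\mathcal{M}(r)$ with $s=\operatorname{rank}(X)$, let $y\in\mathbb{R}^l$ and $\alpha>0$. Set $\beta=\sigma_r(X)/\|\nabla_XL(X;y)\|_2$ if $\nabla_XL(X;y)\ne O$ and $\beta=\infty$ otherwise. Consider the statements (a) $-\nabla_XL(X;y)\in\mathrm{N}^F_{\mathcal{M}(r)}(X)$ (i.e. $X$ is an $F$-stationary point with multiplier $y$); (b) $X\in\Pi_{\mathcal{M}(r)}(X-\alpha\nabla_XL(X;y))$ (i.e. $X$ is an $\alpha$-stationary point with multiplier $y$). Then: (i) (b) implies (a); (ii) if $s=r$ and $\alpha\in(0,\beta]$, then (a) implies (b); (iii) if $s<r$, then (a) implies (b).
   Context: $\langle X,Y\rangle=\sum_{i,j}X_{ij}Y_{ij}$, $\|\cdot\|_F$ the Frobenius norm, $\|\cdot\|_2$ the spectral norm, $\sigma_r(X)$ the $r$-th largest singular value. $f:\mathbb{R}^{m\times n}\to\mathbb{R}$ continuously differentiable; $A^1,\dots,A^l\in\mathbb{R}^{m\times n}$, $b\in\mathbb{R}^l$; $\mathcal{A}(X)=(\langle A^1,X\rangle,\dots,\langle A^l,X\rangle)^\top$; $\mathcal{L}=\{X:\mathcal{A}(X)=b\}$; $\mathcal{M}(r)=\{X:\operatorname{rank}X\le r\}$ with $0\le r<n\le m$. Lagrangian $L(X;y)=f(X)+\sum_{i=1}^ly_i(\langle A^i,X\rangle-b_i)$. $\Pi_{\mathcal{M}(r)}(Z)=\operatorname{argmin}_{Y\in\mathcal{M}(r)}\|Y-Z\|_F$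 (a set). For closed $\Omega$, $X\in\Omega$: $\mathrm{T}^B_\Omega(X)$ is the set of $\Xi$ with $X^k\in\Omega$, $X^k\to X$, $t_k\downarrow0$, $(X^k-X)/t_k\to\Xi$; $\mathrm{N}^F_\Omega(X)=\{Y:\langle Y,\Xi\rangle\le0\ \forall\Xi\in\mathrm{T}^B_\Omega(X)\}$. *)

theory Defs
  imports "HOL-Analysis.Analysis"
begin

text \<open>Matrices in R^(m x n) are modelled as real^'n^'m (rows indexed by 'm, columns by 'n).
  The library inner product on this type is the Frobenius inner product sum_ij X_ij Y_ij,
  and the library norm is the Frobenius norm.\<close>

definition spec_norm :: "real^'n^'m \<Rightarrow> real" where
  "spec_norm X = onorm (\<lambda>x. X *v x)"

definition outer_prod :: "real^'m \<Rightarrow> real^'n \<Rightarrow> real^'n^'m" where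
  "outer_prod u v = (\<chi> i j. u $ i * v $ j)"

text \<open>sigma is a (1-indexed) list of singular values of X: X = sum_{k=1}^n sigma_k u_k v_k^T
  with orthonormal u_1..u_n, orthonormal v_1..v_n, sigma_1 >= ... >= sigma_n >= 0 (thin SVD).\<close>
definition is_singular_values :: "real^'n^'m \<Rightarrow> (nat \<Rightarrow> real) \<Rightarrow> bool" where
  "is_singular_values X \<sigma> \<longleftrightarrow>
     (\<forall>k\<in>{1..CARD('n)}. 0 \<le> \<sigma> k) \<and>
     (\<forall>k\<in>{1..CARD('n)}. \<forall>j\<in>{1..CARD('n)}. k \<le> j \<longrightarrow> \<sigma> j \<le> \<sigma> k) \<and>
     (\<exists>(u::nat \<Rightarrow> real^'m) (v::nat \<Rightarrow> real^'n).
        (\<forall>k\<in>{1..CARD('n)}. \<forall>j\<in>{1..CARD('n)}. u k \<bullet> u j = (if k = j then 1 else 0)) \<and>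
        (\<forall>k\<in>{1..CARD('n)}. \<forall>j\<in>{1..CARD('n)}. v k \<bullet> v j = (if k = j then 1 else 0)) \<and>
        X = (\<Sum>k=1..CARD('n). \<sigma> k *\<^sub>R outer_prod (u k) (v k)))"

definition sing_val :: "nat \<Rightarrow> real^'n^'m \<Rightarrow> real" where
  "sing_val r X = (SOME \<sigma>. is_singular_values X \<sigma>) r"

text \<open>Affine set L = {X. A(X) = b}, with A^1..A^l given as A 0 .. A (l-1).\<close>
definition affine_feas :: "nat \<Rightarrow> (nat \<Rightarrow> real^'n^'m) \<Rightarrow> (nat \<Rightarrow> real) \<Rightarrow> (real^'n^'m) set" where
  "affine_feas l A b = {X. \<forall>i<l. A i \<bullet> X = b i}"

definition low_rank :: "nat \<Rightarrow> (real^'n^'m) set" where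
  "low_rank r = {X. rank X \<le> r}"

definition lagrangian :: "(real^'n^'m \<Rightarrow> real) \<Rightarrow> nat \<Rightarrow> (nat \<Rightarrow> real^'n^'m) \<Rightarrow> (nat \<Rightarrow> real)
    \<Rightarrow> real^'n^'m \<Rightarrow> (nat \<Rightarrow> real) \<Rightarrow> real" where
  "lagrangian f l A b X y = f X + (\<Sum>i<l. y i * (A i \<bullet> X - b i))"

definition proj_set :: "('a::real_normed_vector) set \<Rightarrow> 'a \<Rightarrow> 'a set" where
  "proj_set \<Omega> Z = {Y \<in> \<Omega>. \<forall>W\<in>\<Omega>. norm (Y - Z) \<le> norm (W - Z)}"

definition bouligand_tangent :: "('a::real_normed_vector) set \<Rightarrow> 'a \<Rightarrow> 'a set" where
  "bouligand_tangent \<Omega> X = {\<Xi>. \<exists>(Xs::nat \<Rightarrow> 'a) (t::nat \<Rightarrow> real).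
      (\<forall>k. Xs k \<in> \<Omega>) \<and> Xs \<longlonglongrightarrow> X \<and> (\<forall>k. 0 < t k) \<and> decseq t \<and> t \<longlonglongrightarrow> 0 \<and>
      (\<lambda>k. (Xs k - X) /\<^sub>R t k) \<longlonglongrightarrow> \<Xi>}"

definition frechet_normal :: "('a::real_inner) set \<Rightarrow> 'a \<Rightarrow> 'a set" where
  "frechet_normal \<Omega> X = {Y. \<forall>\<Xi>\<in>bouligand_tangent \<Omega> X. Y \<bullet> \<Xi> \<le> 0}"

end

theory Submission
  imports Defs
begin

lemma exists_orth_unit:
  fixes v :: "nat \<Rightarrow> 'a::euclidean_space"
  assumes "k < DIM('a)"
  shows "\<exists>x. norm x = 1 \<and> (\<forall>i\<in>{1..k}. v i \<bullet> x = 0)"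
proof -
  have "dim (v ` {1..k}) \<le> card (v ` {1..k})" by (simp add: dim_le_card')
  also have "\<dots> \<le> k" using card_image_le[of "{1..k}" v] by simp
  finally have "dim (v ` {1..k}) < DIM('a)" using assms by linarith
  then obtain x where x: "x \<noteq> 0" "\<And>y. y \<in> span (v ` {1..k}) \<Longrightarrow> orthogonal x y"
    using orthogonal_to_subspace_exists[of "v ` {1..k}"] by blast
  have "\<forall>i\<in>{1..k}. v i \<bullet> (x /\<^sub>R norm x) = 0"
  proof
    fix i assume "i \<in> {1..k}"
    then have "orthogonal x (v i)" using x(2) span_base by blast
    then show "v i \<bullet> (x /\<^sub>R norm x) = 0" by (simp add: orthogonal_def inner_commute)
  qed
  moreover have "norm (x /\<^sub>R norm x) = 1" using x(1) by simp
  ultimately show ?thesis by blast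
qed

lemma orth_expand:
  fixes v :: "nat \<Rightarrow> 'a::euclidean_space"
  assumes orth: "\<forall>i\<in>{1..N}. \<forall>j\<in>{1..N}. v i \<bullet> v j = (if i = j then 1 else 0)"
    and N: "N = DIM('a)"
  shows "x = (\<Sum>j=1..N. (v j \<bullet> x) *\<^sub>R v j)"
proof (rule ccontr)
  define y where "y = x - (\<Sum>j=1..N. (v j \<bullet> x) *\<^sub>R v j)"
  assume "x \<noteq> (\<Sum>j=1..N. (v j \<bullet> x) *\<^sub>R v j)"
  then have y0: "y \<noteq> 0" by (simp add: y_def)
  have vy: "v i \<bullet> y = 0" if "i \<in> {1..N}" for i
  proof -
    have "v i \<bullet> (\<Sum>j=1..N. (v j \<bullet> x) *\<^sub>R v j) = (\<Sum>j=1..N. (v j \<bullet> x) * (v i \<bullet> v j))"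
      by (simp add: inner_sum_right)
    also have "\<dots> = (\<Sum>j=1..N. if j = i then v j \<bullet> x else 0)"
      using orth that by (intro sum.cong) auto
    also have "\<dots> = v i \<bullet> x" using that by simp
    finally show ?thesis by (simp add: y_def inner_diff_right)
  qed
  have inj: "inj_on v {1..N}"
  proof (rule inj_onI)
    fix i j assume ij: "i \<in> {1..N}" "j \<in> {1..N}" "v i = v j"
    then have "v i \<bullet> v j = 1" using orth by auto
    then show "i = j" using orth ij(1,2) by (metis zero_neq_one)
  qed
  have ynot: "y \<notin> v ` {1..N}"
    using vy orth by force
  let ?V = "insert y (v ` {1..N})"
  have po: "pairwise orthogonal ?V"
    using orth vy by (auto simp: pairwise_def orthogonal_def inner_commute)
  have z: "0 \<notin> ?V" using y0 orth by force
  have "independent ?V" by (rule pairwise_orthogonal_independent[OF po z])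
  then have "card ?V \<le> DIM('a)" using independent_bound by blast
  moreover have "card ?V = N + 1" using ynot inj by (simp add: card_image)
  ultimately show False using N by simp
qed

lemma quad_zero:
  fixes c K :: real
  assumes "\<And>t. 2 * t * c \<le> t^2 * K"
  shows "c = 0"
proof (rule ccontr)
  assume c: "c \<noteq> 0"
  define D where "D = \<bar>K\<bar> + 1"
  have p: "D > 0" by (simp add: D_def)
  have "(2 * (c/D) * c) * D^2 \<le> ((c/D)^2 * K) * D^2"
    by (rule mult_right_mono) (use assms[of "c/D"] in auto)
  moreover have "(2 * (c/D) * c) * D^2 = 2 * c^2 * D" using p by (simp add: power2_eq_square)
  moreover have "((c/D)^2 * K) * D^2 = c^2 * K" using p by (simp add: power2_eq_square)
  ultimately have "2 * c^2 * D \<le> c^2 * K" by simp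
  then have "c^2 * (2 * D - K) \<le> 0" by (simp add: algebra_simps)
  moreover have "c^2 > 0" using c by simp
  moreover have "2 * D - K > 0" unfolding D_def by (cases "K \<ge> 0") auto
  ultimately show False by (simp add: mult_le_0_iff) 
qed

lemma sq_expand:
  fixes a b :: "'a::real_inner"
  shows "(norm (a + t *\<^sub>R b))\<^sup>2 = (norm a)\<^sup>2 + 2*t*(a \<bullet> b) + t\<^sup>2 * (norm b)\<^sup>2"
proof -
  have "(norm (a + t *\<^sub>R b))\<^sup>2 = (a + t *\<^sub>R b) \<bullet> (a + t *\<^sub>R b)" by (rule power2_norm_eq_inner)
  also have "\<dots> = a \<bullet> a + 2*t*(a \<bullet> b) + t\<^sup>2 * (b \<bullet> b)"
    by (simp add: inner_add_left inner_add_right inner_commute[of b a] power2_eq_square algebra_simps)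
  finally show ?thesis by (simp add: power2_norm_eq_inner)
qed

definition svd_inv :: "('a::euclidean_space \<Rightarrow> 'b::euclidean_space) \<Rightarrow> nat \<Rightarrow> (nat\<Rightarrow>real) \<Rightarrow> (nat\<Rightarrow>'b) \<Rightarrow> (nat\<Rightarrow>'a) \<Rightarrow> bool" where
"svd_inv f k \<sigma> u v \<longleftrightarrow>
 (\<forall>i\<in>{1..k}. \<forall>j\<in>{1..k}. v i \<bullet> v j = (if i=j then 1 else 0)) \<and>
 (\<forall>i\<in>{1..k}. \<forall>j\<in>{1..k}. u i \<bullet> u j = (if i=j then 1 else 0)) \<and>
 (\<forall>j\<in>{1..k}. 0 \<le> \<sigma> j \<and> f (v j) = \<sigma> j *\<^sub>R u j) \<and>
 (\<forall>j\<in>{1..k}. \<forall>x. (\<forall>i\<in>{1..<j}. v i \<bullet> x = 0) \<longrightarrow> (norm (f x))\<^sup>2 \<le> (\<sigma> j)\<^sup>2 * (norm x)\<^sup>2) \<and>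
 (\<forall>j\<in>{1..k}. \<forall>w. (\<forall>i\<in>{1..j}. v i \<bullet> w = 0) \<longrightarrow> f (v j) \<bullet> f w = 0)"

lemma svd_step:
  fixes f :: "'a::euclidean_space \<Rightarrow> 'b::euclidean_space"
  assumes lin: "linear f" and inv: "svd_inv f k \<sigma> u v"
    and ka: "k < DIM('a)" and kb: "k < DIM('b)"
  shows "\<exists>\<sigma>' u' v'. svd_inv f (Suc k) \<sigma>' u' v'"
proof -
  have bl: "bounded_linear f" using lin by (simp add: linear_conv_bounded_linear)
  note I = inv[unfolded svd_inv_def]
  note Iv = I[THEN conjunct1] and Iu = I[THEN conjunct2, THEN conjunct1]
    and Is = I[THEN conjunct2, THEN conjunct2, THEN conjunct1]
    and Im = I[THEN conjunct2, THEN conjunct2, THEN conjunct2, THEN conjunct1]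
    and Ifo = I[THEN conjunct2, THEN conjunct2, THEN conjunct2, THEN conjunct2]
  define S where "S = {x. \<forall>i\<in>{1..k}. v i \<bullet> x = 0}"
  have Seq: "S = (\<Inter>i\<in>{1..k}. {x. v i \<bullet> x = 0})" by (auto simp: S_def)
  have clS: "closed S" unfolding Seq by (intro closed_INT ballI closed_Collect_eq continuous_intros)
  define C where "C = S \<inter> sphere 0 1"
  have cC: "compact C" unfolding C_def by (intro closed_Int_compact clS compact_sphere)
  obtain x1 where x1: "norm x1 = 1" "\<forall>i\<in>{1..k}. v i \<bullet> x1 = 0"
    using exists_orth_unit[OF ka] by blast
  have neC: "C \<noteq> {}" using x1 by (auto simp: C_def S_def)
  have cont: "continuous_on C (\<lambda>x. norm (f x))"
    by (intro continuous_intros linear_continuous_on bl)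
  obtain x0 where x0C: "x0 \<in> C" and x0max: "\<forall>y\<in>C. norm (f y) \<le> norm (f x0)"
    using continuous_attains_sup[OF cC neC cont] by blast
  have x0S: "x0 \<in> S" and x0n: "norm x0 = 1" using x0C by (auto simp: C_def)
  define s0 where "s0 = norm (f x0)"
  have s0nn: "0 \<le> s0" by (simp add: s0_def)
  have maxp: "(norm (f x))\<^sup>2 \<le> s0\<^sup>2 * (norm x)\<^sup>2" if "x \<in> S" for x
  proof (cases "x = 0")
    case True then show ?thesis using linear_0[OF lin] by simp
  next
    case False
    have "x /\<^sub>R norm x \<in> C" using that False
      by (auto simp: C_def S_def inner_scaleR_right)
    then have "norm (f (x /\<^sub>R norm x)) \<le> s0" using x0max by (simp add: s0_def)
    then have "norm (f x) / norm x \<le> s0" using False by (simp add: linear_scale[OF lin] divide_inverse_commute)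
    then have "norm (f x) \<le> s0 * norm x" using False by (simp add: divide_le_eq)
    then have "(norm (f x))\<^sup>2 \<le> (s0 * norm x)\<^sup>2" by (intro power_mono) auto
    then show ?thesis by (simp add: power_mult_distrib)
  qed
  have foc: "f x0 \<bullet> f w = 0" if wS: "w \<in> S" and wx: "w \<bullet> x0 = 0" for w
  proof -
    have "2 * t * (f x0 \<bullet> f w) \<le> t^2 * (s0\<^sup>2 * (norm w)\<^sup>2 - (norm (f w))\<^sup>2)" for t
    proof -
      have "x0 + t *\<^sub>R w \<in> S" using x0S wS by (auto simp: S_def inner_add_right inner_scaleR_right)
      then have "(norm (f (x0 + t *\<^sub>R w)))\<^sup>2 \<le> s0\<^sup>2 * (norm (x0 + t *\<^sub>R w))\<^sup>2" by (rule maxp)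
      moreover have "f (x0 + t *\<^sub>R w) = f x0 + t *\<^sub>R f w" by (simp add: linear_add[OF lin] linear_scale[OF lin])
      moreover have "(norm (f x0 + t *\<^sub>R f w))\<^sup>2 = s0\<^sup>2 + 2 * t * (f x0 \<bullet> f w) + t^2 * (norm (f w))\<^sup>2"
        unfolding s0_def by (rule sq_expand)
      moreover have "(norm (x0 + t *\<^sub>R w))\<^sup>2 = 1 + t^2 * (norm w)\<^sup>2"
        using x0n wx sq_expand[of x0 t w] by (simp add: inner_commute)
      ultimately show ?thesis by (simp add: algebra_simps)
    qed
    then show ?thesis by (rule quad_zero)
  qed
  obtain uz where uz: "norm uz = 1" "\<forall>i\<in>{1..k}. u i \<bullet> uz = 0"
    using exists_orth_unit[OF kb] by blast
  define u0 where "u0 = (if s0 > 0 then f x0 /\<^sub>R s0 else uz)"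
  define \<sigma>' where "\<sigma>' = \<sigma>(Suc k := s0)"
  define u' where "u' = u(Suc k := u0)"
  define v' where "v' = v(Suc k := x0)"
  have fx0: "f x0 = s0 *\<^sub>R u0"
    using s0nn by (auto simp: u0_def s0_def)
  have u0n: "u0 \<bullet> u0 = 1"
  proof (cases "s0 > 0")
    case True
    then have "norm u0 = 1" by (simp add: u0_def s0_def)
    then show ?thesis by (simp add: norm_eq_1)
  next
    case False then show ?thesis using uz by (simp add: u0_def norm_eq_1)
  qed
  have u0o: "u j \<bullet> u0 = 0" if j: "j \<in> {1..k}" for j
  proof (cases "s0 > 0")
    case True
    have "\<forall>i\<in>{1..<j}. v i \<bullet> x0 = 0" using x0S j by (auto simp: S_def)
    then have "(norm (f x0))\<^sup>2 \<le> (\<sigma> j)\<^sup>2 * (norm x0)\<^sup>2" using Im j by blast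
    then have "s0\<^sup>2 \<le> (\<sigma> j)\<^sup>2" using x0n by (simp add: s0_def)
    moreover have "0 \<le> \<sigma> j" using Is j by blast
    ultimately have "s0 \<le> \<sigma> j" by (rule power2_le_imp_le)
    then have sj: "\<sigma> j > 0" using True by linarith
    have "\<forall>i\<in>{1..j}. v i \<bullet> x0 = 0" using x0S j by (auto simp: S_def)
    then have "f (v j) \<bullet> f x0 = 0" using Ifo j by blast
    moreover have "f (v j) = \<sigma> j *\<^sub>R u j" using Is j by blast
    ultimately have "\<sigma> j * (u j \<bullet> f x0) = 0" by simp
    then have "u j \<bullet> f x0 = 0" using sj by simp
    then show ?thesis using True by (simp add: u0_def)
  next
    case False then show ?thesis using uz j by (simp add: u0_def)
  qed
  have vk: "v' l = v l" "u' l = u l" "\<sigma>' l = \<sigma> l" if "l \<noteq> Suc k" for l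
    using that by (auto simp: v'_def u'_def \<sigma>'_def)
  have vK: "v' (Suc k) = x0" "u' (Suc k) = u0" "\<sigma>' (Suc k) = s0"
    by (auto simp: v'_def u'_def \<sigma>'_def)
  have vx: "v l \<bullet> x0 = 0" "x0 \<bullet> v l = 0" if "l \<in> {1..k}" for l
    using x0S that by (auto simp: S_def inner_commute)
  have xx: "x0 \<bullet> x0 = 1" using x0n by (simp add: norm_eq_1)
  have uu: "u0 \<bullet> u l = 0" if "l \<in> {1..k}" for l using u0o[OF that] by (simp add: inner_commute)
  have "svd_inv f (Suc k) \<sigma>' u' v'"
    unfolding svd_inv_def
  proof (intro conjI ballI allI impI)
    fix i j assume i: "i \<in> {1..Suc k}" and j: "j \<in> {1..Suc k}"
    have iv: "i \<noteq> Suc k \<Longrightarrow> i \<in> {1..k}" "j \<noteq> Suc k \<Longrightarrow> j \<in> {1..k}" using i j by auto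
    show "v' i \<bullet> v' j = (if i = j then 1 else 0)"
    proof (cases "i = Suc k"; cases "j = Suc k")
      assume "i \<noteq> Suc k" "j \<noteq> Suc k"
      then show ?thesis using Iv iv vk by simp
    next
      assume "i = Suc k" "j \<noteq> Suc k"
      then show ?thesis using iv vk vK vx by simp
    next
      assume "i \<noteq> Suc k" "j = Suc k"
      then show ?thesis using iv vk vK vx by simp
    next
      assume "i = Suc k" "j = Suc k"
      then show ?thesis using vK xx by simp
    qed
    show "u' i \<bullet> u' j = (if i = j then 1 else 0)"
    proof (cases "i = Suc k"; cases "j = Suc k")
      assume "i \<noteq> Suc k" "j \<noteq> Suc k"
      then show ?thesis using Iu iv vk by simp
    next
      assume "i = Suc k" "j \<noteq> Suc k"
      then show ?thesis using iv vk vK uu by simp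
    next
      assume "i \<noteq> Suc k" "j = Suc k"
      then show ?thesis using iv vk vK u0o by simp
    next
      assume "i = Suc k" "j = Suc k"
      then show ?thesis using vK u0n by simp
    qed
  next
    fix j assume j: "j \<in> {1..Suc k}"
    show "0 \<le> \<sigma>' j"
    proof (cases "j = Suc k")
      case True then show ?thesis using vK s0nn by simp
    next
      case False then show ?thesis using vk j Is by simp
    qed
    show "f (v' j) = \<sigma>' j *\<^sub>R u' j"
    proof (cases "j = Suc k")
      case True then show ?thesis using vK fx0 by simp
    next
      case False then show ?thesis using vk j Is by simp
    qed
  next
    fix j x assume j: "j \<in> {1..Suc k}" and hx: "\<forall>i\<in>{1..<j}. v' i \<bullet> x = 0"
    show "(norm (f x))\<^sup>2 \<le> (\<sigma>' j)\<^sup>2 * (norm x)\<^sup>2"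
    proof (cases "j = Suc k")
      case True
      then have "x \<in> S" using hx vk by (auto simp: S_def)
      then show ?thesis using maxp True vK by simp
    next
      case False
      then have j': "j \<in> {1..k}" using j by auto
      have "\<forall>i\<in>{1..<j}. v i \<bullet> x = 0" using hx j' vk by auto
      then show ?thesis using Im j' False vk by simp
    qed
  next
    fix j w assume j: "j \<in> {1..Suc k}" and hw: "\<forall>i\<in>{1..j}. v' i \<bullet> w = 0"
    show "f (v' j) \<bullet> f w = 0"
    proof (cases "j = Suc k")
      case True
      have "w \<in> S" unfolding S_def
      proof (intro CollectI ballI)
        fix i assume i: "i \<in> {1..k}"
        then have "v' i \<bullet> w = 0" using hw True by auto
        then show "v i \<bullet> w = 0" using vk(1)[of i] i by simp
      qed
      moreover have "w \<bullet> x0 = 0" using hw True vK by (auto simp: inner_commute)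
      ultimately show ?thesis using foc True vK by simp
    next
      case False
      then have j': "j \<in> {1..k}" using j by auto
      have "\<forall>i\<in>{1..j}. v i \<bullet> w = 0" using hw j' vk by auto
      then show ?thesis using Ifo j' False vk by simp
    qed
  qed
  then show ?thesis by blast
qed

lemma svd_exists_gen:
  fixes f :: "'a::euclidean_space \<Rightarrow> 'b::euclidean_space"
  assumes lin: "linear f" and dim: "DIM('a) \<le> DIM('b)"
  shows "\<exists>\<sigma> u v. svd_inv f DIM('a) \<sigma> u v"
proof -
  have "k \<le> DIM('a) \<Longrightarrow> \<exists>\<sigma> u v. svd_inv f k \<sigma> u v" for k
  proof (induction k)
    case 0 show ?case by (simp add: svd_inv_def)
  next
    case (Suc k)
    then obtain \<sigma> u v where "svd_inv f k \<sigma> u v" by auto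
    then show ?case using svd_step[OF lin] Suc.prems dim by simp
  qed
  then show ?thesis by simp
qed

lemma svd_sum:
  fixes f :: "'a::euclidean_space \<Rightarrow> 'b::euclidean_space"
  assumes lin: "linear f" and inv: "svd_inv f DIM('a) \<sigma> u v"
  shows "f x = (\<Sum>j=1..DIM('a). (\<sigma> j * (v j \<bullet> x)) *\<^sub>R u j)"
proof -
  note I = inv[unfolded svd_inv_def]
  have "x = (\<Sum>j=1..DIM('a). (v j \<bullet> x) *\<^sub>R v j)"
    by (rule orth_expand) (use I in auto)
  then have "f x = f (\<Sum>j=1..DIM('a). (v j \<bullet> x) *\<^sub>R v j)" by simp
  also have "\<dots> = (\<Sum>j=1..DIM('a). (v j \<bullet> x) *\<^sub>R f (v j))"
    by (simp add: linear_sum[OF lin] linear_scale[OF lin])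
  also have "\<dots> = (\<Sum>j=1..DIM('a). (\<sigma> j * (v j \<bullet> x)) *\<^sub>R u j)"
    by (intro sum.cong) (use I in auto)
  finally show ?thesis .
qed

lemma outer_mult: "outer_prod u v *v x = (v \<bullet> x) *\<^sub>R u"
  by (simp add: vec_eq_iff matrix_vector_mult_def outer_prod_def inner_vec_def sum_distrib_left sum_distrib_right mult.commute mult.left_commute)

lemma sum_mat_mult: "(\<Sum>k\<in>K. c k *\<^sub>R (M k :: real^'n^'m)) *v x = (\<Sum>k\<in>K. c k *\<^sub>R (M k *v x))"
proof (induction K rule: infinite_finite_induct)
  case (insert a F)
  then show ?case by (simp add: matrix_vector_mult_add_rdistrib scaleR_matrix_vector_assoc)
qed simp_all

lemma svd_matrix_exists:
  fixes X :: "real^'n^'m"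
  assumes "CARD('n) \<le> CARD('m)"
  shows "\<exists>\<sigma>. is_singular_values X \<sigma>"
proof -
  have lin: "linear ((*v) X)" by (rule matrix_vector_mul_linear)
  have dd: "DIM(real^'n) \<le> DIM(real^'m)" using assms by simp
  obtain \<sigma> u v where inv: "svd_inv ((*v) X) DIM(real^'n) \<sigma> u v"
    using svd_exists_gen[OF lin dd] by blast
  note I = inv[unfolded svd_inv_def]
  note Iv = I[THEN conjunct1] and Iu = I[THEN conjunct2, THEN conjunct1]
    and Is = I[THEN conjunct2, THEN conjunct2, THEN conjunct1]
    and Im = I[THEN conjunct2, THEN conjunct2, THEN conjunct2, THEN conjunct1]
  have D: "DIM(real^'n) = CARD('n)" by simp
  have nn: "\<forall>k\<in>{1..CARD('n)}. 0 \<le> \<sigma> k" using Is unfolding D by blast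
  have mono: "\<forall>k\<in>{1..CARD('n)}. \<forall>j\<in>{1..CARD('n)}. k \<le> j \<longrightarrow> \<sigma> j \<le> \<sigma> k"
  proof (intro ballI impI)
    fix k j assume k: "k \<in> {1..CARD('n)}" and j: "j \<in> {1..CARD('n)}" and kj: "k \<le> j"
    have k': "k \<in> {1..DIM(real^'n)}" and j': "j \<in> {1..DIM(real^'n)}" using k j by simp_all
    show "\<sigma> j \<le> \<sigma> k"
    proof (cases "k = j")
      case False
      have "\<forall>i\<in>{1..<k}. v i \<bullet> v j = 0"
      proof
        fix i assume i: "i \<in> {1..<k}"
        then have i': "i \<in> {1..DIM(real^'n)}" "i \<noteq> j" using kj k by auto
        have "v i \<bullet> v j = (if i = j then 1 else 0)" using Iv i'(1) j' by blast
        then show "v i \<bullet> v j = 0" using i'(2) by simp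
      qed
      then have A: "(norm (X *v v j))\<^sup>2 \<le> (\<sigma> k)\<^sup>2 * (norm (v j))\<^sup>2" using Im[rule_format, OF k'] by blast
      have "v j \<bullet> v j = 1" using Iv j' by simp
      then have B: "norm (v j) = 1" by (simp add: norm_eq_1)
      have "u j \<bullet> u j = 1" using Iu j' by simp
      then have C: "norm (u j) = 1" by (simp add: norm_eq_1)
      have E: "X *v v j = \<sigma> j *\<^sub>R u j" "0 \<le> \<sigma> j" using Is j' by auto
      have "(\<sigma> j)\<^sup>2 \<le> (\<sigma> k)\<^sup>2" using A B C E by simp
      moreover have "0 \<le> \<sigma> k" using Is k' by blast
      ultimately show ?thesis by (rule power2_le_imp_le)
    qed simp
  qed
  have "X = (\<Sum>k=1..CARD('n). \<sigma> k *\<^sub>R outer_prod (u k) (v k))"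
    unfolding matrix_eq
  proof
    fix x
    have "X *v x = (\<Sum>j=1..DIM(real^'n). (\<sigma> j * (v j \<bullet> x)) *\<^sub>R u j)"
      by (rule svd_sum[OF lin inv])
    then show "X *v x = (\<Sum>k=1..CARD('n). \<sigma> k *\<^sub>R outer_prod (u k) (v k)) *v x"
      unfolding D by (simp add: sum_mat_mult outer_mult)
  qed
  then show ?thesis unfolding is_singular_values_def using nn mono Iu Iv unfolding D by blast
qed

lemma tr_inner: "(transpose (X::real^'n^'m) *v y) \<bullet> x = y \<bullet> (X *v x)"
  by (metis dot_lmul_matrix transpose_transpose vector_transpose_matrix)

lemma inner_outer: "(M::real^'n^'m) \<bullet> outer_prod a b = a \<bullet> (M *v b)"
  by (simp add: inner_vec_def outer_prod_def matrix_vector_mult_def sum_distrib_left mult.commute mult.left_commute)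

lemma orth_inner_sum:
  fixes u :: "nat \<Rightarrow> 'a::real_inner"
  assumes o: "\<forall>i\<in>K. \<forall>j\<in>K. u i \<bullet> u j = (if i = j then 1 else 0)" and fin: "finite K"
  shows "(\<Sum>k\<in>K. a k *\<^sub>R u k) \<bullet> (\<Sum>k\<in>K. b k *\<^sub>R u k) = (\<Sum>k\<in>K. a k * b k)"
proof -
  have "(\<Sum>k\<in>K. a k *\<^sub>R u k) \<bullet> (\<Sum>k\<in>K. b k *\<^sub>R u k) = (\<Sum>j\<in>K. \<Sum>i\<in>K. b j * (a i * (u i \<bullet> u j)))"
    by (simp add: inner_sum_left inner_sum_right sum_distrib_left)
  also have "\<dots> = (\<Sum>j\<in>K. \<Sum>i\<in>K. (if i = j then a j * b j else 0))"
    using o by (intro sum.cong refl) auto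
  also have "\<dots> = (\<Sum>k\<in>K. a k * b k)" using fin by simp
  finally show ?thesis .
qed

lemma proj_facts:
  fixes z :: "'a::euclidean_space"
  assumes fin: "finite B" and po: "pairwise orthogonal B" and un: "\<forall>b\<in>B. norm b = 1"
  shows "(norm (z - (\<Sum>b\<in>B. (b \<bullet> z) *\<^sub>R b)))\<^sup>2 = (norm z)\<^sup>2 - (\<Sum>b\<in>B. (b \<bullet> z)\<^sup>2)"
    and "(\<Sum>b\<in>B. (b \<bullet> z)\<^sup>2) \<le> (norm z)\<^sup>2"
    and "s \<in> span B \<Longrightarrow> (norm z)\<^sup>2 - (\<Sum>b\<in>B. (b \<bullet> z)\<^sup>2) \<le> (norm (z - s))\<^sup>2"
proof -
  define p where "p = (\<Sum>b\<in>B. (b \<bullet> z) *\<^sub>R b)"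
  have bp: "c \<bullet> p = c \<bullet> z" if c: "c \<in> B" for c
  proof -
    have "c \<bullet> p = (\<Sum>b\<in>B. (b \<bullet> z) * (c \<bullet> b))" by (simp add: p_def inner_sum_right)
    also have "\<dots> = (\<Sum>b\<in>B. if b = c then c \<bullet> z else 0)"
    proof (intro sum.cong refl)
      fix b assume b: "b \<in> B"
      show "(b \<bullet> z) * (c \<bullet> b) = (if b = c then c \<bullet> z else 0)"
      proof (cases "b = c")
        case True
        then have "c \<bullet> b = 1" using un c by (simp add: norm_eq_1)
        then show ?thesis using True by simp
      next
        case False
        then have "c \<bullet> b = 0" using po b c by (auto simp: pairwise_def orthogonal_def)
        then show ?thesis using False by simp
      qed
    qed
    also have "\<dots> = c \<bullet> z" using fin c by simp
    finally show ?thesis .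
  qed
  have pspan: "p \<in> span B" unfolding p_def by (intro span_sum span_scale span_base)
  have orth: "orthogonal (z - p) y" if "y \<in> span B" for y
    using that
  proof (rule orthogonal_to_span)
    fix c assume "c \<in> B" then show "orthogonal (z - p) c"
      using bp by (simp add: orthogonal_def inner_diff_right inner_commute)
  qed
  have pz: "p \<bullet> z = (\<Sum>b\<in>B. (b \<bullet> z)\<^sup>2)" by (simp add: p_def inner_sum_left power2_eq_square)
  have "(norm (z - p))\<^sup>2 = (z - p) \<bullet> z - (z - p) \<bullet> p"
    by (simp add: power2_norm_eq_inner inner_diff_right)
  also have "(z - p) \<bullet> p = 0" using orth[OF pspan] by (simp add: orthogonal_def)
  finally have eq: "(norm (z - p))\<^sup>2 = (norm z)\<^sup>2 - (\<Sum>b\<in>B. (b \<bullet> z)\<^sup>2)"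
    using pz by (simp add: inner_diff_left power2_norm_eq_inner)
  then show "(norm (z - (\<Sum>b\<in>B. (b \<bullet> z) *\<^sub>R b)))\<^sup>2 = (norm z)\<^sup>2 - (\<Sum>b\<in>B. (b \<bullet> z)\<^sup>2)"
    by (simp add: p_def)
  show "(\<Sum>b\<in>B. (b \<bullet> z)\<^sup>2) \<le> (norm z)\<^sup>2" using eq by (metis diff_ge_0_iff_ge zero_le_power2)
  assume s: "s \<in> span B"
  have "p - s \<in> span B" using pspan s by (rule span_diff)
  then have "orthogonal (z - p) (p - s)" by (rule orth)
  then have "(norm ((z - p) + (p - s)))\<^sup>2 = (norm (z - p))\<^sup>2 + (norm (p - s))\<^sup>2"
    by (rule norm_add_Pythagorean)
  then have "(norm (z - p))\<^sup>2 \<le> (norm (z - s))\<^sup>2" by simp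
  then show "(norm z)\<^sup>2 - (\<Sum>b\<in>B. (b \<bullet> z)\<^sup>2) \<le> (norm (z - s))\<^sup>2" using eq by simp
qed

lemma frob_sq: "(norm (M::real^'n^'m))\<^sup>2 = (\<Sum>i\<in>UNIV. (norm (M$i))\<^sup>2)"
  by (simp add: power2_norm_eq_inner inner_vec_def)

lemma vec_sq: "(norm (x::real^'m))\<^sup>2 = (\<Sum>i\<in>UNIV. (x$i)\<^sup>2)"
  unfolding power2_norm_eq_inner by (simp add: inner_vec_def power2_eq_square)

lemma real_bound:
  fixes a s :: "nat \<Rightarrow> real"
  assumes fin: "finite K" and RK: "R \<subseteq> K" and a: "\<forall>k\<in>K. 0 \<le> a k \<and> a k \<le> 1"
    and sR: "\<forall>k\<in>R. e\<^sup>2 \<le> (s k)\<^sup>2" and d: "e\<^sup>2 * d \<le> e\<^sup>2 * card R"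
  shows "(\<Sum>k\<in>K. ((s k)\<^sup>2 - e\<^sup>2) * a k) + e\<^sup>2 * d \<le> (\<Sum>k\<in>K. (s k)\<^sup>2)"
proof -
  have t: "((s k)\<^sup>2 - e\<^sup>2) * a k \<le> (s k)\<^sup>2 - (if k \<in> R then e\<^sup>2 else 0)" if k: "k \<in> K" for k
  proof (cases "k \<in> R")
    case True
    then have "0 \<le> (s k)\<^sup>2 - e\<^sup>2" using sR by simp
    then have "((s k)\<^sup>2 - e\<^sup>2) * a k \<le> ((s k)\<^sup>2 - e\<^sup>2) * 1" using a k by (intro mult_left_mono) auto
    then show ?thesis using True by simp
  next
    case False
    have "((s k)\<^sup>2 - e\<^sup>2) * a k \<le> (s k)\<^sup>2 * a k" using a k by (intro mult_right_mono) auto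
    also have "\<dots> \<le> (s k)\<^sup>2 * 1" using a k by (intro mult_left_mono) auto
    finally show ?thesis using False by simp
  qed
  have "(\<Sum>k\<in>K. ((s k)\<^sup>2 - e\<^sup>2) * a k) \<le> (\<Sum>k\<in>K. (s k)\<^sup>2 - (if k \<in> R then e\<^sup>2 else 0))"
    by (rule sum_mono) (rule t)
  also have "\<dots> = (\<Sum>k\<in>K. (s k)\<^sup>2) - e\<^sup>2 * card R"
    using fin RK by (simp add: sum_subtractf sum.If_cases Int_absorb1)
  finally show ?thesis using d by linarith
qed

lemma EY:
  fixes X G W :: "real^'n^'m" and \<sigma> :: "nat \<Rightarrow> real" and u :: "nat \<Rightarrow> real^'m" and v :: "nat \<Rightarrow> real^'n"
  assumes Xdec: "X = (\<Sum>k=1..CARD('n). \<sigma> k *\<^sub>R outer_prod (u k) (v k))"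
    and uo: "\<forall>i\<in>{1..CARD('n)}. \<forall>j\<in>{1..CARD('n)}. u i \<bullet> u j = (if i = j then 1 else 0)"
    and vo: "\<forall>i\<in>{1..CARD('n)}. \<forall>j\<in>{1..CARD('n)}. v i \<bullet> v j = (if i = j then 1 else 0)"
    and nn: "\<forall>k\<in>{1..CARD('n)}. 0 \<le> \<sigma> k"
    and mono: "\<forall>k\<in>{1..CARD('n)}. \<forall>j\<in>{1..CARD('n)}. k \<le> j \<longrightarrow> \<sigma> j \<le> \<sigma> k"
    and Gv: "\<forall>k\<in>{1..CARD('n)}. 0 < \<sigma> k \<longrightarrow> G *v v k = 0"
    and Gu: "\<forall>k\<in>{1..CARD('n)}. 0 < \<sigma> k \<longrightarrow> (\<forall>x. u k \<bullet> (G *v x) = 0)"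
    and r: "1 \<le> r" "r \<le> CARD('n)"
    and e: "\<alpha> * spec_norm G \<le> \<sigma> r" and apos: "\<alpha> > 0"
    and W: "rank W \<le> r"
  shows "norm (X - (X - \<alpha> *\<^sub>R G)) \<le> norm (W - (X - \<alpha> *\<^sub>R G))"
proof -
  define N where "N = CARD('n)"
  define K where "K = {k\<in>{1..N}. 0 < \<sigma> k}"
  define c where "c = spec_norm G"
  define e where "e = \<alpha> * c"
  define Z where "Z = X - \<alpha> *\<^sub>R G"
  have finK: "finite K" by (simp add: K_def)
  have KN: "K \<subseteq> {1..N}" by (auto simp: K_def)
  have c0: "0 \<le> c" unfolding c_def spec_norm_def by (rule onorm_pos_le) simp
  have e0: "0 \<le> e" using c0 apos by (simp add: e_def)
  have Gb: "norm (G *v x) \<le> c * norm x" for x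
    unfolding c_def spec_norm_def by (rule onorm) simp
  have uoK: "\<forall>i\<in>K. \<forall>j\<in>K. u i \<bullet> u j = (if i = j then 1 else 0)"
  proof (intro ballI)
    fix i j assume "i \<in> K" "j \<in> K"
    then have "i \<in> {1..CARD('n)}" "j \<in> {1..CARD('n)}" using KN by (auto simp: N_def)
    then show "u i \<bullet> u j = (if i = j then 1 else 0)" using uo by blast
  qed
  have voK: "\<forall>i\<in>K. \<forall>j\<in>K. v i \<bullet> v j = (if i = j then 1 else 0)"
  proof (intro ballI)
    fix i j assume "i \<in> K" "j \<in> K"
    then have "i \<in> {1..CARD('n)}" "j \<in> {1..CARD('n)}" using KN by (auto simp: N_def)
    then show "v i \<bullet> v j = (if i = j then 1 else 0)" using vo by blast
  qed
  have "(\<Sum>k=1..N. \<sigma> k *\<^sub>R outer_prod (u k) (v k)) = (\<Sum>k\<in>K. \<sigma> k *\<^sub>R outer_prod (u k) (v k))"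
    by (rule sum.mono_neutral_right) (use KN nn in \<open>auto simp: K_def N_def\<close>)
  then have XK: "X = (\<Sum>k\<in>K. \<sigma> k *\<^sub>R outer_prod (u k) (v k))"
    using Xdec by (simp add: N_def)
  have Xb: "X *v b = (\<Sum>k\<in>K. (\<sigma> k * (v k \<bullet> b)) *\<^sub>R u k)" for b
    unfolding XK by (simp add: sum_mat_mult outer_mult)
  have XG: "X \<bullet> G = 0"
  proof -
    have "X \<bullet> G = G \<bullet> X" by (rule inner_commute)
    also have "\<dots> = (\<Sum>k\<in>K. \<sigma> k * (u k \<bullet> (G *v v k)))"
      unfolding XK by (simp add: inner_sum_right inner_outer)
    also have "\<dots> = 0" using Gv KN by (intro sum.neutral) (auto simp: K_def N_def)
    finally show ?thesis .
  qed
  have XX: "(norm X)\<^sup>2 = (\<Sum>k\<in>K. (\<sigma> k)\<^sup>2)"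
  proof -
    have "(norm X)\<^sup>2 = (\<Sum>k\<in>K. \<sigma> k * (u k \<bullet> (X *v v k)))"
      unfolding power2_norm_eq_inner
      by (subst (2) XK) (simp add: inner_sum_right inner_commute[of X] inner_outer)
    also have "\<dots> = (\<Sum>k\<in>K. (\<sigma> k)\<^sup>2)"
    proof (intro sum.cong refl)
      fix k assume k: "k \<in> K"
      have "X *v v k = (\<Sum>j\<in>K. (\<sigma> j * (v j \<bullet> v k)) *\<^sub>R u j)" by (rule Xb)
      then have "u k \<bullet> (X *v v k) = (\<Sum>j\<in>K. (if j = k then 1 else 0) *\<^sub>R u j) \<bullet> (\<Sum>j\<in>K. (\<sigma> j * (v j \<bullet> v k)) *\<^sub>R u j)"
        using finK k by (simp add: if_distrib[of "\<lambda>x. x *\<^sub>R _"] cong: if_cong)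
      also have "\<dots> = (\<Sum>j\<in>K. (if j = k then 1 else 0) * (\<sigma> j * (v j \<bullet> v k)))"
        by (rule orth_inner_sum[OF uoK finK])
      also have "\<dots> = (\<Sum>j\<in>K. if j = k then \<sigma> k else 0)"
      proof (intro sum.cong refl)
        fix j assume "j \<in> K"
        then show "(if j = k then 1 else 0) * (\<sigma> j * (v j \<bullet> v k)) = (if j = k then \<sigma> k else 0)"
          using voK k by auto
      qed
      also have "\<dots> = \<sigma> k" using finK k by simp
      finally show "\<sigma> k * (u k \<bullet> (X *v v k)) = (\<sigma> k)\<^sup>2" by (simp add: power2_eq_square)
    qed
    finally show ?thesis .
  qed
  have ZZ: "(norm Z)\<^sup>2 = (\<Sum>k\<in>K. (\<sigma> k)\<^sup>2) + \<alpha>\<^sup>2 * (norm G)\<^sup>2"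
  proof -
    have "(norm Z)\<^sup>2 = (norm X)\<^sup>2 - 2 * \<alpha> * (X \<bullet> G) + \<alpha>\<^sup>2 * (norm G)\<^sup>2"
      unfolding Z_def power2_norm_eq_inner
      by (simp add: inner_diff_left inner_diff_right inner_commute power2_eq_square algebra_simps)
    then show ?thesis using XX XG by simp
  qed
  define S where "S = span (rows W)"
  have subS: "subspace S" by (simp add: S_def subspace_span)
  obtain B where BS: "B \<subseteq> S" and po: "pairwise orthogonal B" and un: "\<And>x. x \<in> B \<Longrightarrow> norm x = 1"
    and indB: "independent B" and cardB: "card B = dim S" and spB: "span B = S"
    using orthonormal_basis_subspace[OF subS] by blast
  have finB: "finite B" using indB independent_bound by blast
  have un': "\<forall>b\<in>B. norm b = 1" using un by blast
  have dB: "card B \<le> r" using cardB W by (simp add: S_def row_rank_def dim_span)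
  have rowstep: "(norm Z)\<^sup>2 - (\<Sum>b\<in>B. (norm (Z *v b))\<^sup>2) \<le> (norm (Z - W))\<^sup>2"
  proof -
    have Wi: "W $ i \<in> span B" for i
    proof -
      have "W $ i \<in> rows W" unfolding rows_def
        by (rule CollectI, rule exI[of _ i]) (simp add: row_def vec_eq_iff)
      then show ?thesis using spB S_def span_base by blast
    qed
    have "(\<Sum>i\<in>UNIV. (norm (Z $ i))\<^sup>2 - (\<Sum>b\<in>B. (b \<bullet> Z $ i)\<^sup>2)) \<le> (\<Sum>i\<in>UNIV. (norm (Z $ i - W $ i))\<^sup>2)"
      by (intro sum_mono proj_facts(3)[OF finB po un' Wi])
    also have "\<dots> = (norm (Z - W))\<^sup>2" by (simp add: frob_sq)
    finally have A: "(\<Sum>i\<in>UNIV. (norm (Z $ i))\<^sup>2) - (\<Sum>i\<in>UNIV. \<Sum>b\<in>B. (b \<bullet> Z $ i)\<^sup>2) \<le> (norm (Z - W))\<^sup>2"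
      by (simp add: sum_subtractf)
    have "(\<Sum>i\<in>UNIV. \<Sum>b\<in>B. (b \<bullet> Z $ i)\<^sup>2) = (\<Sum>b\<in>B. \<Sum>i\<in>UNIV. ((Z *v b) $ i)\<^sup>2)"
      by (subst sum.swap) (simp add: matrix_vector_mul_component inner_commute)
    also have "\<dots> = (\<Sum>b\<in>B. (norm (Z *v b))\<^sup>2)" by (simp add: vec_sq)
    finally show ?thesis using A by (simp add: frob_sq)
  qed
  have perb: "(norm (Z *v b))\<^sup>2 \<le> (\<Sum>k\<in>K. ((\<sigma> k)\<^sup>2 - e\<^sup>2) * (v k \<bullet> b)\<^sup>2) + e\<^sup>2" if b1: "norm b = 1" for b
  proof -
    have Zb: "Z *v b = X *v b - \<alpha> *\<^sub>R (G *v b)"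
      by (simp add: Z_def matrix_vector_mult_diff_rdistrib scaleR_matrix_vector_assoc)
    have XGb: "(X *v b) \<bullet> (G *v b) = 0"
    proof -
      have "(X *v b) \<bullet> (G *v b) = (\<Sum>k\<in>K. (\<sigma> k * (v k \<bullet> b)) * (u k \<bullet> (G *v b)))"
        by (simp add: Xb inner_sum_left)
      also have "\<dots> = 0" using Gu KN by (intro sum.neutral) (auto simp: K_def N_def)
      finally show ?thesis .
    qed
    have nXb: "(norm (X *v b))\<^sup>2 = (\<Sum>k\<in>K. (\<sigma> k)\<^sup>2 * (v k \<bullet> b)\<^sup>2)"
      unfolding power2_norm_eq_inner Xb orth_inner_sum[OF uoK finK]
      by (simp add: power2_eq_square mult_ac)
    define p where "p = (\<Sum>k\<in>K. (v k \<bullet> b) *\<^sub>R v k)"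
    have Gp: "G *v p = 0"
    proof -
      have "G *v p = (\<Sum>k\<in>K. (v k \<bullet> b) *\<^sub>R (G *v v k))"
        unfolding p_def by (simp add: linear_sum[OF matrix_vector_mul_linear] linear_scale[OF matrix_vector_mul_linear])
      also have "\<dots> = 0" using Gv KN by (intro sum.neutral) (auto simp: K_def N_def)
      finally show ?thesis .
    qed
    have GbGp: "G *v b = G *v (b - p)" using Gp by (simp add: matrix_vector_mult_diff_distrib)
    have bp: "b \<bullet> p = (\<Sum>k\<in>K. (v k \<bullet> b)\<^sup>2)"
      by (simp add: p_def inner_sum_right power2_eq_square inner_commute)
    have pp: "p \<bullet> p = (\<Sum>k\<in>K. (v k \<bullet> b)\<^sup>2)"
      unfolding p_def orth_inner_sum[OF voK finK] by (simp add: power2_eq_square)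
    have nbp: "(norm (b - p))\<^sup>2 = 1 - (\<Sum>k\<in>K. (v k \<bullet> b)\<^sup>2)"
    proof -
      have "(norm (b - p))\<^sup>2 = b \<bullet> b - 2 * (b \<bullet> p) + p \<bullet> p"
        unfolding power2_norm_eq_inner by (simp add: inner_diff_left inner_diff_right inner_commute)
      then show ?thesis using bp pp b1 by (simp add: norm_eq_1)
    qed
    have "norm (G *v b) \<le> c * norm (b - p)" using Gb GbGp by metis
    then have "(norm (G *v b))\<^sup>2 \<le> (c * norm (b - p))\<^sup>2" by (intro power_mono) auto
    then have nGb: "(norm (G *v b))\<^sup>2 \<le> c\<^sup>2 * (1 - (\<Sum>k\<in>K. (v k \<bullet> b)\<^sup>2))"
      using nbp by (simp add: power_mult_distrib)
    have "(norm (Z *v b))\<^sup>2 = (norm (X *v b))\<^sup>2 + \<alpha>\<^sup>2 * (norm (G *v b))\<^sup>2"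
    proof -
      have "(norm (Z *v b))\<^sup>2 = (norm (X *v b))\<^sup>2 - 2 * \<alpha> * ((X *v b) \<bullet> (G *v b)) + \<alpha>\<^sup>2 * (norm (G *v b))\<^sup>2"
        unfolding Zb power2_norm_eq_inner
        by (simp add: inner_diff_left inner_diff_right inner_commute power2_eq_square algebra_simps)
      then show ?thesis using XGb by simp
    qed
    also have "\<dots> \<le> (\<Sum>k\<in>K. (\<sigma> k)\<^sup>2 * (v k \<bullet> b)\<^sup>2) + \<alpha>\<^sup>2 * (c\<^sup>2 * (1 - (\<Sum>k\<in>K. (v k \<bullet> b)\<^sup>2)))"
      using nXb nGb by (simp add: mult_left_mono)
    also have "\<dots> = (\<Sum>k\<in>K. ((\<sigma> k)\<^sup>2 - e\<^sup>2) * (v k \<bullet> b)\<^sup>2) + e\<^sup>2"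
      by (simp add: e_def power_mult_distrib algebra_simps sum_subtractf sum_distrib_left)
    finally show ?thesis .
  qed
  define a where "a k = (\<Sum>b\<in>B. (v k \<bullet> b)\<^sup>2)" for k
  have sumb: "(\<Sum>b\<in>B. (norm (Z *v b))\<^sup>2) \<le> (\<Sum>k\<in>K. ((\<sigma> k)\<^sup>2 - e\<^sup>2) * a k) + e\<^sup>2 * card B"
  proof -
    have "(\<Sum>b\<in>B. (norm (Z *v b))\<^sup>2) \<le> (\<Sum>b\<in>B. (\<Sum>k\<in>K. ((\<sigma> k)\<^sup>2 - e\<^sup>2) * (v k \<bullet> b)\<^sup>2) + e\<^sup>2)"
      by (intro sum_mono perb un)
    also have "\<dots> = (\<Sum>k\<in>K. ((\<sigma> k)\<^sup>2 - e\<^sup>2) * a k) + e\<^sup>2 * card B"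
      unfolding a_def by (simp add: sum.distrib sum_distrib_left) (rule sum.swap)
    finally show ?thesis .
  qed
  have abnd: "\<forall>k\<in>K. 0 \<le> a k \<and> a k \<le> 1"
  proof
    fix k assume k: "k \<in> K"
    have "a k = (\<Sum>b\<in>B. (b \<bullet> v k)\<^sup>2)" by (simp add: a_def inner_commute)
    also have "\<dots> \<le> (norm (v k))\<^sup>2" by (rule proj_facts(2)[OF finB po un'])
    also have "norm (v k) = 1" using voK k by (simp add: norm_eq_1)
    finally show "0 \<le> a k \<and> a k \<le> 1" by (simp add: a_def sum_nonneg)
  qed
  define R where "R = (if e > 0 then {1..r} else {})"
  have RK: "R \<subseteq> K"
  proof (cases "e > 0")
    case True
    have "k \<in> K" if "k \<in> {1..r}" for k
    proof -
      have "\<sigma> r \<le> \<sigma> k" using mono that r by auto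
      then show ?thesis using that r True e by (auto simp: K_def N_def e_def c_def)
    qed
    then show ?thesis using True by (auto simp: R_def)
  qed (simp add: R_def)
  have sR: "\<forall>k\<in>R. e\<^sup>2 \<le> (\<sigma> k)\<^sup>2"
  proof
    fix k assume k: "k \<in> R"
    then have "e > 0" "k \<in> {1..r}" by (auto simp: R_def split: if_splits)
    then have kk: "k \<in> {1..CARD('n)}" "r \<in> {1..CARD('n)}" "k \<le> r" using r by auto
    then have "\<sigma> r \<le> \<sigma> k" using mono by blast
    then have "e \<le> \<sigma> k" using e by (simp add: e_def c_def)
    then show "e\<^sup>2 \<le> (\<sigma> k)\<^sup>2" using e0 by (intro power_mono) auto
  qed
  have dR: "e\<^sup>2 * card B \<le> e\<^sup>2 * card R"
  proof (cases "e > 0")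
    case True then show ?thesis using dB by (simp add: R_def)
  next
    case False then have "e = 0" using e0 by simp
    then show ?thesis by simp
  qed
  have "(\<Sum>k\<in>K. ((\<sigma> k)\<^sup>2 - e\<^sup>2) * a k) + e\<^sup>2 * card B \<le> (\<Sum>k\<in>K. (\<sigma> k)\<^sup>2)"
    by (rule real_bound[OF finK RK abnd sR dR])
  then have "\<alpha>\<^sup>2 * (norm G)\<^sup>2 \<le> (norm (Z - W))\<^sup>2"
    using rowstep sumb ZZ by linarith
  then have "(norm (\<alpha> *\<^sub>R G))\<^sup>2 \<le> (norm (W - Z))\<^sup>2"
    using apos by (simp add: norm_minus_commute power_mult_distrib)
  then have "norm (\<alpha> *\<^sub>R G) \<le> norm (W - Z)" by (rule power2_le_imp_le) simp
  then show ?thesis by (simp add: Z_def)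
qed

lemma tangent_line:
  assumes "\<And>t. X + t *\<^sub>R H \<in> \<Omega>"
  shows "H \<in> bouligand_tangent \<Omega> X"
proof -
  define t where "t k = inverse (real (Suc k))" for k
  define Xs where "Xs k = X + t k *\<^sub>R H" for k
  have "Xs \<longlonglongrightarrow> X + 0 *\<^sub>R H"
    unfolding Xs_def t_def by (intro tendsto_intros LIMSEQ_inverse_real_of_nat)
  then have lim: "Xs \<longlonglongrightarrow> X" by simp
  have pos: "\<forall>k. 0 < t k" by (simp add: t_def)
  have dec: "decseq t" unfolding decseq_def t_def
    by (intro allI impI le_imp_inverse_le) auto
  have t0: "t \<longlonglongrightarrow> 0" unfolding t_def by (rule LIMSEQ_inverse_real_of_nat)
  have q: "(\<lambda>k. (Xs k - X) /\<^sub>R t k) = (\<lambda>k. H)" 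
  proof
    fix k have "t k \<noteq> 0" using pos by (metis less_irrefl)
    then show "(Xs k - X) /\<^sub>R t k = H" by (simp add: Xs_def)
  qed
  have conv: "(\<lambda>k. (Xs k - X) /\<^sub>R t k) \<longlonglongrightarrow> H" unfolding q by simp
  have mem: "\<forall>k. Xs k \<in> \<Omega>" using assms by (simp add: Xs_def)
  show ?thesis unfolding bouligand_tangent_def using mem lim pos dec t0 conv by blast
qed

lemma normal_line:
  assumes N: "- G \<in> frechet_normal \<Omega> X" and L: "\<And>t. X + t *\<^sub>R H \<in> \<Omega>"
  shows "G \<bullet> H = 0"
proof -
  have "H \<in> bouligand_tangent \<Omega> X" by (rule tangent_line[OF L])
  moreover have "- H \<in> bouligand_tangent \<Omega> X"
    by (rule tangent_line) (use L[of "- _"] in simp)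
  ultimately have "(- G) \<bullet> H \<le> 0" "(- G) \<bullet> (- H) \<le> 0" using N by (auto simp: frechet_normal_def)
  then show ?thesis by simp
qed

lemma rank_left: "rank (X + t *\<^sub>R outer_prod (X *v w) c) \<le> rank (X::real^'n^'m)"
proof -
  have "X + t *\<^sub>R outer_prod (X *v w) c = X ** (mat 1 + t *\<^sub>R outer_prod w c)"
    unfolding matrix_eq
    by (simp add: matrix_vector_mul_assoc[symmetric] matrix_vector_mult_add_rdistrib
        scaleR_matrix_vector_assoc[symmetric] outer_mult matrix_vector_right_distrib matrix_vector_mult_scaleR)
  then show ?thesis by (metis rank_mul_le_left)
qed

lemma transpose_add': "transpose (A + B) = transpose A + transpose (B::real^'n^'m)"
  by (simp add: transpose_def vec_eq_iff)

lemma transpose_outer: "transpose (outer_prod a b) = outer_prod b a"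
  by (simp add: transpose_def outer_prod_def vec_eq_iff)

lemma rank_right: "rank (X + t *\<^sub>R outer_prod c (transpose X *v w)) \<le> rank (X::real^'n^'m)"
proof -
  have "transpose (X + t *\<^sub>R outer_prod c (transpose X *v w)) = transpose X + t *\<^sub>R outer_prod (transpose X *v w) c"
    by (simp add: transpose_add' transpose_scalar transpose_outer)
  then show ?thesis using rank_left[of "transpose X" t w c] by (metis rank_transpose)
qed

lemma rank_add1: "rank (X + t *\<^sub>R outer_prod a b) \<le> rank (X::real^'n^'m) + 1"
proof -
  let ?R = "range (\<lambda>x. X *v x)"
  have sub: "range (\<lambda>x. (X + t *\<^sub>R outer_prod a b) *v x) \<subseteq> span (insert a ?R)"
  proof
    fix y assume "y \<in> range (\<lambda>x. (X + t *\<^sub>R outer_prod a b) *v x)"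
    then obtain x where y: "y = (X + t *\<^sub>R outer_prod a b) *v x" by blast
    have "y = X *v x + (t * (b \<bullet> x)) *\<^sub>R a"
      unfolding y by (simp add: matrix_vector_mult_add_rdistrib scaleR_matrix_vector_assoc[symmetric] outer_mult)
    moreover have "X *v x \<in> span (insert a ?R)" by (intro span_base) auto
    moreover have "(t * (b \<bullet> x)) *\<^sub>R a \<in> span (insert a ?R)" by (intro span_scale span_base) auto
    ultimately show "y \<in> span (insert a ?R)" by (simp add: span_add)
  qed
  have "rank (X + t *\<^sub>R outer_prod a b) \<le> dim (span (insert a ?R))"
    unfolding rank_dim_range by (rule dim_subset[OF sub])
  also have "\<dots> = dim (insert a ?R)" by (rule dim_span)
  also have "\<dots> \<le> dim ?R + 1" by (simp add: dim_insert)
  finally show ?thesis by (simp add: rank_dim_range)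
qed

lemma astat_Fstat:
  fixes G X :: "'a::real_inner"
  assumes P: "X \<in> proj_set \<Omega> (X - \<alpha> *\<^sub>R G)" and apos: "\<alpha> > 0"
  shows "- G \<in> frechet_normal \<Omega> X"
  unfolding frechet_normal_def
proof (intro CollectI ballI)
  fix \<Xi> assume "\<Xi> \<in> bouligand_tangent \<Omega> X"
  then obtain Xs t where mem: "\<forall>k. Xs k \<in> \<Omega>" and pos: "\<forall>k. 0 < t k" and t0: "t \<longlonglongrightarrow> 0"
    and conv: "(\<lambda>k. (Xs k - X) /\<^sub>R t k) \<longlonglongrightarrow> \<Xi>"
    unfolding bouligand_tangent_def by blast
  define D where "D k = (Xs k - X) /\<^sub>R t k" for k
  have ineq: "0 \<le> t k * (norm (D k))\<^sup>2 + 2 * \<alpha> * (G \<bullet> D k)" for k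
  proof -
    have tk: "t k > 0" using pos by blast
    have XsD: "Xs k - (X - \<alpha> *\<^sub>R G) = \<alpha> *\<^sub>R G + t k *\<^sub>R D k"
      using tk by (simp add: D_def algebra_simps)
    have "norm (X - (X - \<alpha> *\<^sub>R G)) \<le> norm (Xs k - (X - \<alpha> *\<^sub>R G))"
      using P mem unfolding proj_set_def by blast
    then have "norm (\<alpha> *\<^sub>R G) \<le> norm (\<alpha> *\<^sub>R G + t k *\<^sub>R D k)" using XsD by simp
    then have "(norm (\<alpha> *\<^sub>R G))\<^sup>2 \<le> (norm (\<alpha> *\<^sub>R G + t k *\<^sub>R D k))\<^sup>2"
      by (intro power_mono) auto
    also have "\<dots> = (norm (\<alpha> *\<^sub>R G))\<^sup>2 + 2 * t k * ((\<alpha> *\<^sub>R G) \<bullet> D k) + (t k)\<^sup>2 * (norm (D k))\<^sup>2"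
      by (rule sq_expand)
    finally have "0 \<le> t k * (t k * (norm (D k))\<^sup>2 + 2 * \<alpha> * (G \<bullet> D k))"
      by (simp add: power2_eq_square algebra_simps)
    then show ?thesis using tk by (simp add: zero_le_mult_iff)
  qed
  have "(\<lambda>k. t k * (norm (D k))\<^sup>2 + 2 * \<alpha> * (G \<bullet> D k)) \<longlonglongrightarrow> 0 * (norm \<Xi>)\<^sup>2 + 2 * \<alpha> * (G \<bullet> \<Xi>)"
    using conv unfolding D_def[abs_def] by (intro tendsto_intros t0)
  then have "0 \<le> 0 * (norm \<Xi>)\<^sup>2 + 2 * \<alpha> * (G \<bullet> \<Xi>)"
    by (rule LIMSEQ_le_const) (use ineq in blast)
  then have "0 \<le> G \<bullet> \<Xi>" using apos by (simp add: zero_le_mult_iff)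
  then show "- G \<bullet> \<Xi> \<le> 0" by simp
qed

lemma inner_ext:
  fixes a b :: "'a::real_inner"
  assumes "\<And>x. a \<bullet> x = b \<bullet> x"
  shows "a = b"
proof -
  have "(a - b) \<bullet> (a - b) = 0" using assms[of "a - b"] by (simp add: inner_diff_left)
  then show ?thesis by simp
qed

theorem proposition4p1:
  fixes f :: "real^'n^'m \<Rightarrow> real"
    and gradf :: "real^'n^'m \<Rightarrow> real^'n^'m"
    and A :: "nat \<Rightarrow> real^'n^'m" and b :: "nat \<Rightarrow> real" and l :: nat
    and r :: nat and X :: "real^'n^'m" and y :: "nat \<Rightarrow> real" and \<alpha> :: real
  assumes dims: "r < CARD('n)" "CARD('n) \<le> CARD('m)"
    and f_grad: "\<And>Z. (f has_derivative (\<lambda>H. gradf Z \<bullet> H)) (at Z)"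
    and f_C1: "continuous_on UNIV gradf"
    and X_feas: "X \<in> affine_feas l A b \<inter> low_rank r"
    and alpha_pos: "\<alpha> > 0"
  shows "let G = gradf X + (\<Sum>i<l. y i *\<^sub>R A i);
             s = rank X;
             \<beta> = (if G \<noteq> 0 then ereal (sing_val r X / spec_norm G) else \<infinity>);
             Fstat = (- G \<in> frechet_normal (low_rank r) X);
             astat = (X \<in> proj_set (low_rank r) (X - \<alpha> *\<^sub>R G))
         in (astat \<longrightarrow> Fstat)
          \<and> (s = r \<and> ereal \<alpha> \<le> \<beta> \<longrightarrow> (Fstat \<longrightarrow> astat))
          \<and> (s < r \<longrightarrow> (Fstat \<longrightarrow> astat))"
proof -
  define G where "G = gradf X + (\<Sum>i<l. y i *\<^sub>R A i)"
  have XL: "X \<in> low_rank r" using X_feas by simp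
  then have Xr: "rank X \<le> r" by (simp add: low_rank_def)
  let ?F = "- G \<in> frechet_normal (low_rank r) X"
  let ?P = "X \<in> proj_set (low_rank r) (X - \<alpha> *\<^sub>R G)"
  have triv: "?P" if "G = 0" using XL that by (simp add: proj_set_def)
  have i: "?P \<longrightarrow> ?F" using astat_Fstat alpha_pos by blast
  have Ai: "(X *v w) \<bullet> (G *v c) = 0" if F: ?F for w c
  proof -
    have "G \<bullet> outer_prod (X *v w) c = 0"
      by (rule normal_line[OF F]) (unfold low_rank_def mem_Collect_eq, rule order_trans[OF rank_left Xr])
    then show ?thesis by (simp add: inner_outer)
  qed
  have Bi: "G *v (transpose X *v w) = 0" if F: ?F for w
  proof -
    have "G \<bullet> outer_prod (G *v (transpose X *v w)) (transpose X *v w) = 0"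
      by (rule normal_line[OF F]) (unfold low_rank_def mem_Collect_eq, rule order_trans[OF rank_right Xr])
    then show ?thesis by (simp add: inner_outer)
  qed
  have iii: "rank X < r \<longrightarrow> ?F \<longrightarrow> ?P"
  proof (intro impI)
    assume lt: "rank X < r" and F: ?F
    have "G $ i $ j = 0" for i j
    proof -
      have "G \<bullet> outer_prod (axis i 1) (axis j 1) = 0"
        by (rule normal_line[OF F]) (unfold low_rank_def mem_Collect_eq, rule order_trans[OF rank_add1], use lt in simp)
      then show ?thesis by (simp add: inner_outer inner_axis' matrix_vector_mult_basis column_def)
    qed
    then have "G = 0" by (simp add: vec_eq_iff)
    then show ?P by (rule triv)
  qed
  have ii: "rank X = r \<and> ereal \<alpha> \<le> (if G \<noteq> 0 then ereal (sing_val r X / spec_norm G) else \<infinity>) \<longrightarrow> ?F \<longrightarrow> ?P"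
  proof (intro impI)
    assume h: "rank X = r \<and> ereal \<alpha> \<le> (if G \<noteq> 0 then ereal (sing_val r X / spec_norm G) else \<infinity>)" and F: ?F
    show ?P
    proof (cases "G = 0")
      case True then show ?thesis by (rule triv)
    next
      case Gn: False
      show ?thesis
      proof (cases "r = 0")
        case True
        then have "X = 0" using h rank_eq_0 by auto
        then show ?thesis using True by (auto simp: proj_set_def low_rank_def rank_eq_0)
      next
        case rpos: False
        have "\<not> (\<forall>x. G *v x = 0)" using Gn by (simp add: matrix_eq)
        then have cpos: "spec_norm G > 0" unfolding spec_norm_def
          using onorm_pos_lt[OF matrix_vector_mul_bounded_linear[of G]] by simp
        have "\<alpha> \<le> sing_val r X / spec_norm G" using h Gn by simp
        then have ae: "\<alpha> * spec_norm G \<le> sing_val r X" using cpos by (simp add: pos_le_divide_eq)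
        define \<sigma> where "\<sigma> = (SOME \<sigma>. is_singular_values X \<sigma>)"
        have sv: "is_singular_values X \<sigma>" unfolding \<sigma>_def by (rule someI_ex[OF svd_matrix_exists[OF dims(2)]])
        have sr: "sing_val r X = \<sigma> r" by (simp add: sing_val_def \<sigma>_def)
        obtain u v where nn: "\<forall>k\<in>{1..CARD('n)}. 0 \<le> \<sigma> k"
          and mono: "\<forall>k\<in>{1..CARD('n)}. \<forall>j\<in>{1..CARD('n)}. k \<le> j \<longrightarrow> \<sigma> j \<le> \<sigma> k"
          and uo: "\<forall>i\<in>{1..CARD('n)}. \<forall>j\<in>{1..CARD('n)}. u i \<bullet> u j = (if i = j then 1 else 0)"
          and vo: "\<forall>i\<in>{1..CARD('n)}. \<forall>j\<in>{1..CARD('n)}. v i \<bullet> v j = (if i = j then 1 else 0)"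
          and Xdec: "X = (\<Sum>k=1..CARD('n). \<sigma> k *\<^sub>R outer_prod (u k) (v k))"
          using sv unfolding is_singular_values_def by blast
        have Xx: "X *v x = (\<Sum>j=1..CARD('n). (\<sigma> j * (v j \<bullet> x)) *\<^sub>R u j)" for x
          by (subst Xdec) (simp add: sum_mat_mult outer_mult)
        have Xv: "X *v v k = \<sigma> k *\<^sub>R u k" if k: "k \<in> {1..CARD('n)}" for k
        proof -
          have "X *v v k = (\<Sum>j=1..CARD('n). if j = k then \<sigma> k *\<^sub>R u k else 0)"
            unfolding Xx using vo k by (intro sum.cong refl) auto
          also have "\<dots> = \<sigma> k *\<^sub>R u k" using k by simp
          finally show ?thesis .
        qed
        have Xtu: "transpose X *v u k = \<sigma> k *\<^sub>R v k" if k: "k \<in> {1..CARD('n)}" for k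
        proof (rule inner_ext)
          fix x
          have "(transpose X *v u k) \<bullet> x = u k \<bullet> (X *v x)" by (rule tr_inner)
          also have "\<dots> = (\<Sum>j=1..CARD('n). (\<sigma> j * (v j \<bullet> x)) * (u k \<bullet> u j))"
            unfolding Xx by (simp add: inner_sum_right)
          also have "\<dots> = (\<Sum>j=1..CARD('n). if j = k then \<sigma> k * (v k \<bullet> x) else 0)"
            using uo k by (intro sum.cong refl) auto
          also have "\<dots> = (\<sigma> k *\<^sub>R v k) \<bullet> x" using k by simp
          finally show "(transpose X *v u k) \<bullet> x = (\<sigma> k *\<^sub>R v k) \<bullet> x" .
        qed
        have Gv: "\<forall>k\<in>{1..CARD('n)}. 0 < \<sigma> k \<longrightarrow> G *v v k = 0"
        proof (intro ballI impI)
          fix k assume k: "k \<in> {1..CARD('n)}" and sp: "0 < \<sigma> k"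
          have "transpose X *v ((1 / \<sigma> k) *\<^sub>R u k) = v k"
            using Xtu[OF k] sp by (simp add: matrix_vector_mult_scaleR)
          then show "G *v v k = 0" using Bi[OF F, of "(1 / \<sigma> k) *\<^sub>R u k"] by simp
        qed
        have Gu: "\<forall>k\<in>{1..CARD('n)}. 0 < \<sigma> k \<longrightarrow> (\<forall>x. u k \<bullet> (G *v x) = 0)"
        proof (intro ballI impI allI)
          fix k x assume k: "k \<in> {1..CARD('n)}" and sp: "0 < \<sigma> k"
          have "X *v ((1 / \<sigma> k) *\<^sub>R v k) = u k"
            using Xv[OF k] sp by (simp add: matrix_vector_mult_scaleR)
          then show "u k \<bullet> (G *v x) = 0" using Ai[OF F, of "(1 / \<sigma> k) *\<^sub>R v k" x] by simp
        qed
        have r1: "1 \<le> r" "r \<le> CARD('n)" using rpos dims(1) by auto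
        show ?thesis unfolding proj_set_def
        proof (intro CollectI conjI ballI XL)
          fix W :: "real^'n^'m" assume "W \<in> low_rank r"
          then have W: "rank W \<le> r" by (simp add: low_rank_def)
          show "norm (X - (X - \<alpha> *\<^sub>R G)) \<le> norm (W - (X - \<alpha> *\<^sub>R G))"
            by (rule EY[OF Xdec uo vo nn mono Gv Gu r1 _ alpha_pos W]) (use ae sr in simp)
        qed
      qed
    qed
  qed
  show ?thesis unfolding Let_def G_def[symmetric] using i ii iii by blast
qed

end
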